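(* Let $G$ be a strongly connected signed digraph on $[n]$ without positive cycles, which is not a cycle. If $\tau(G)\le 1$, then there is a word $w$ of length $3n-1$ which synchronizes every and-or-net on $G$.
   Context: A signed digraph on $V$ is $(V,E)$ with $E\subseteq V\times V\times\{-1,1\}$ (loops allowed). Cycles have no repeated vertices (a loop is a cycle); the sign of a cycle is the product of its arc signs; "$G$ is a cycle" means $G$ itself is a single cycle. $\tau(G)$ is the minimum size of a feedback vertex set of $G$ (a set of vertices meeting every cycle). A Boolean network (BN) is $f:\{0,1\}^V\to\{0,1\}^V$; its signed interaction digraph has a positive (negative) arc from $j$ to $i$ iff for some $x$ with $x_j=0$, $f_i(x+e_j)-f_i(x)$ is positive (negative). An and-or-net on $G$ is a BN whose signed interaction digraph is $G$ and each $f_i$ is a conjunction ($f_i(x)=1$ iff $x_j=1$ for all positive and $x_j=0$ for all negative in-neighbors $j$ of $i$) or a disjunction ($f_i(x)=0$ iff $x_j=0$ for all positive and $x_j=1$ for all negative in-neighbors). $f^i(x)$ is $x$ with $x_i$ replaced by $f_i(x)$; $f^{i_1\cdots i_\ell}=f^{i_\ell}\circ\cdots\circ f^{i_1}$; $w$ synchronizes $f$ if $f^w$ is constant. *)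

theory Defs
  imports Main
begin

text \<open>Signed digraphs on a vertex set V: arcs (j, i, s) from j to i with sign s in {-1,1}.
  Boolean configurations x in {0,1}^V are represented by the subset of V of vertices with value 1.
  A Boolean network is a map f on such subsets (only its values on subsets of V matter).\<close>

type_synonym sdigraph = "(nat \<times> nat \<times> int) set"

definition signed_digraph :: "nat set \<Rightarrow> sdigraph \<Rightarrow> bool" where
  "signed_digraph V E \<longleftrightarrow> E \<subseteq> V \<times> V \<times> {-1, 1}"

definition strongly_connected :: "nat set \<Rightarrow> sdigraph \<Rightarrow> bool" where
  "strongly_connected V E \<longleftrightarrow>
     (\<forall>i\<in>V. \<forall>j\<in>V. (i, j) \<in> {(a, b). \<exists>s. (a, b, s) \<in> E}\<^sup>*)"

definition is_cycle :: "sdigraph \<Rightarrow> nat list \<Rightarrow> int list \<Rightarrow> bool" where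
  "is_cycle E vs ss \<longleftrightarrow> vs \<noteq> [] \<and> distinct vs \<and> length ss = length vs \<and>
     (\<forall>t < length vs. (vs ! t, vs ! ((t + 1) mod length vs), ss ! t) \<in> E)"

definition cycle_sign :: "int list \<Rightarrow> int" where
  "cycle_sign ss = prod_list ss"

definition no_positive_cycle :: "sdigraph \<Rightarrow> bool" where
  "no_positive_cycle E \<longleftrightarrow> (\<forall>vs ss. is_cycle E vs ss \<longrightarrow> cycle_sign ss \<noteq> 1)"

definition graph_is_cycle :: "nat set \<Rightarrow> sdigraph \<Rightarrow> bool" where
  "graph_is_cycle V E \<longleftrightarrow> (\<exists>vs ss. is_cycle E vs ss \<and> set vs = V \<and>
     E = {(vs ! t, vs ! ((t + 1) mod length vs), ss ! t) | t. t < length vs})"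

definition feedback_vertex_set :: "nat set \<Rightarrow> sdigraph \<Rightarrow> nat set \<Rightarrow> bool" where
  "feedback_vertex_set V E F \<longleftrightarrow> F \<subseteq> V \<and>
     (\<forall>vs ss. is_cycle E vs ss \<longrightarrow> set vs \<inter> F \<noteq> {})"

definition tau :: "nat set \<Rightarrow> sdigraph \<Rightarrow> nat" where
  "tau V E = (LEAST k. \<exists>F. feedback_vertex_set V E F \<and> card F = k)"

definition is_BN :: "nat set \<Rightarrow> (nat set \<Rightarrow> nat set) \<Rightarrow> bool" where
  "is_BN V f \<longleftrightarrow> (\<forall>x. x \<subseteq> V \<longrightarrow> f x \<subseteq> V)"

definition interaction_digraph :: "nat set \<Rightarrow> (nat set \<Rightarrow> nat set) \<Rightarrow> sdigraph" where
  "interaction_digraph V f =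
     {(j, i, s). j \<in> V \<and> i \<in> V \<and>
        ((s = 1 \<and> (\<exists>x. x \<subseteq> V \<and> j \<notin> x \<and> i \<notin> f x \<and> i \<in> f (insert j x))) \<or>
         (s = -1 \<and> (\<exists>x. x \<subseteq> V \<and> j \<notin> x \<and> i \<in> f x \<and> i \<notin> f (insert j x))))}"

definition and_or_net :: "nat set \<Rightarrow> sdigraph \<Rightarrow> (nat set \<Rightarrow> nat set) \<Rightarrow> bool" where
  "and_or_net V E f \<longleftrightarrow> is_BN V f \<and> interaction_digraph V f = E \<and>
     (\<forall>i\<in>V.
        (\<forall>x. x \<subseteq> V \<longrightarrow>
           (i \<in> f x \<longleftrightarrow> (\<forall>j. ((j, i, 1) \<in> E \<longrightarrow> j \<in> x) \<and> ((j, i, -1) \<in> E \<longrightarrow> j \<notin> x))))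
      \<or> (\<forall>x. x \<subseteq> V \<longrightarrow>
           (i \<notin> f x \<longleftrightarrow> (\<forall>j. ((j, i, 1) \<in> E \<longrightarrow> j \<notin> x) \<and> ((j, i, -1) \<in> E \<longrightarrow> j \<in> x)))))"

definition upd :: "(nat set \<Rightarrow> nat set) \<Rightarrow> nat \<Rightarrow> nat set \<Rightarrow> nat set" where
  "upd f i x = (if i \<in> f x then insert i x else x - {i})"

definition upd_word :: "(nat set \<Rightarrow> nat set) \<Rightarrow> nat list \<Rightarrow> nat set \<Rightarrow> nat set" where
  "upd_word f w x = fold (upd f) w x"

definition synchronizes :: "nat set \<Rightarrow> (nat set \<Rightarrow> nat set) \<Rightarrow> nat list \<Rightarrow> bool" where
  "synchronizes V f w \<longleftrightarrow> (\<exists>c. \<forall>x. x \<subseteq> V \<longrightarrow> upd_word f w x = c)"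

end

theory Submission
  imports Defs "HOL-Library.Transitive_Closure_Table"
begin


lemma cycle_from_trancl:
  assumes xx: "(x,x) \<in> R\<^sup>+"
    and RE: "\<And>a b. (a,b) \<in> R \<Longrightarrow> a \<in> U \<and> b \<in> U \<and> (\<exists>s. (a,b,s) \<in> E)"
  shows "\<exists>vs ss. is_cycle E vs ss \<and> set vs \<subseteq> U"
proof -
  obtain y where xy: "(x,y) \<in> R" and yx: "(y,x) \<in> R\<^sup>*" using xx by (meson tranclD)
  have "(\<lambda>a b. (a,b) \<in> R)\<^sup>*\<^sup>* y x" using yx by (simp add: rtranclp_rtrancl_eq)
  then obtain xs where "rtrancl_path (\<lambda>a b. (a,b) \<in> R) y xs x"
    using rtranclp_eq_rtrancl_path by metis
  then obtain xs' where p: "rtrancl_path (\<lambda>a b. (a,b) \<in> R) y xs' x" and d: "distinct (y # xs')"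
    using rtrancl_path_distinct by metis
  define vs where "vs = y # xs'"
  define k where "k = length vs"
  have kpos: "k > 0" unfolding k_def vs_def by simp
  have lastx: "last vs = x"
  proof (cases "xs' = []")
    case True
    then show ?thesis using p unfolding vs_def by (auto elim: rtrancl_path.cases)
  next
    case False
    then show ?thesis using rtrancl_path_last[OF p False] unfolding vs_def by simp
  qed
  have arcs: "(vs!t, vs!((t+1) mod k)) \<in> R" if "t < k" for t
  proof (cases "t < length xs'")
    case True
    then have "(t+1) mod k = t+1" unfolding k_def vs_def by simp
    then show ?thesis using rtrancl_path_nth[OF p True] True unfolding vs_def by simp
  next
    case False
    then have t: "t = length xs'" using that unfolding k_def vs_def by simp
    then have "(t+1) mod k = 0" unfolding k_def vs_def by simp
    moreover have "vs ! t = last vs" using t unfolding vs_def by (simp add: last_conv_nth)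
    ultimately show ?thesis using lastx xy unfolding vs_def by simp
  qed
  define ss where "ss = map (\<lambda>t. SOME s. (vs!t, vs!((t+1) mod k), s) \<in> E) [0..<k]"
  have "is_cycle E vs ss"
    unfolding is_cycle_def
  proof (intro conjI allI impI)
    show "vs \<noteq> []" "distinct vs" using d unfolding vs_def by auto
    show "length ss = length vs" unfolding ss_def k_def by simp
    fix t assume "t < length vs"
    then have t: "t < k" unfolding k_def .
    then obtain s where "(vs!t, vs!((t+1) mod k), s) \<in> E" using arcs RE by blast
    then have "(vs!t, vs!((t+1) mod k), SOME s. (vs!t, vs!((t+1) mod k), s) \<in> E) \<in> E"
      by (rule someI)
    then have "(vs!t, vs!((t+1) mod k), ss!t) \<in> E" unfolding ss_def using t by simp
    then show "(vs ! t, vs ! ((t + 1) mod length vs), ss ! t) \<in> E" unfolding k_def .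
  qed
  moreover have "set vs \<subseteq> U"
  proof
    fix z assume "z \<in> set vs"
    then obtain t where "t < k" "z = vs!t" unfolding k_def by (metis in_set_conv_nth)
    then show "z \<in> U" using arcs RE by blast
  qed
  ultimately show ?thesis by blast
qed



definition lit :: "nat set \<Rightarrow> nat \<Rightarrow> int \<Rightarrow> bool" where
  "lit x a s = (if s = 1 then a \<in> x else a \<notin> x)"

fun topo :: "nat set \<Rightarrow> sdigraph \<Rightarrow> nat \<Rightarrow> nat set \<Rightarrow> nat list \<Rightarrow> bool" where
  "topo V E v A [] = True"
| "topo V E v A (u # S) = (u \<in> V \<and> u \<noteq> v \<and> (\<forall>a s. (a,u,s) \<in> E \<longrightarrow> a \<in> A) \<and> topo V E v (insert u A) S)"

lemma topo_append: "topo V E v A (S1 @ S2) = (topo V E v A S1 \<and> topo V E v (A \<union> set S1) S2)"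
  by (induction S1 arbitrary: A) auto

lemma upd_word_Cons: "upd_word f (u # S) x = upd_word f S (upd f u x)"
  unfolding upd_word_def by simp

lemma upd_word_append: "upd_word f (S1 @ S2) x = upd_word f S2 (upd_word f S1 x)"
  unfolding upd_word_def by simp

lemma upd_word_Nil: "upd_word f [] x = x"
  unfolding upd_word_def by simp

definition conjtype :: "nat set \<Rightarrow> sdigraph \<Rightarrow> (nat set \<Rightarrow> nat set) \<Rightarrow> nat \<Rightarrow> bool" where
  "conjtype V E f i = (\<forall>x. x \<subseteq> V \<longrightarrow> (i \<in> f x \<longleftrightarrow> (\<forall>a s. (a,i,s) \<in> E \<longrightarrow> lit x a s)))"

lemma ao_cases:
  assumes sd: "signed_digraph V E" and ao: "and_or_net V E f" and i: "i \<in> V"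
  shows "conjtype V E f i \<or> (\<forall>x. x \<subseteq> V \<longrightarrow> (i \<notin> f x \<longleftrightarrow> (\<forall>a s. (a,i,s) \<in> E \<longrightarrow> \<not> lit x a s)))"
proof -
  have sgn: "\<And>a s. (a,i,s) \<in> E \<Longrightarrow> s = 1 \<or> s = -1" using sd unfolding signed_digraph_def by auto
  have e1: "(\<forall>j. ((j, i, 1) \<in> E \<longrightarrow> j \<in> x) \<and> ((j, i, -1) \<in> E \<longrightarrow> j \<notin> x)) =
        (\<forall>a s. (a,i,s) \<in> E \<longrightarrow> lit x a s)" for x
  proof
    assume H: "\<forall>j. ((j, i, 1) \<in> E \<longrightarrow> j \<in> x) \<and> ((j, i, -1) \<in> E \<longrightarrow> j \<notin> x)"
    show "\<forall>a s. (a,i,s) \<in> E \<longrightarrow> lit x a s"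
    proof (intro allI impI)
      fix a s assume as: "(a,i,s) \<in> E"
      from sgn[OF as] show "lit x a s"
      proof
        assume "s = 1" then show ?thesis using H as unfolding lit_def by simp
      next
        assume "s = -1" then show ?thesis using H as unfolding lit_def by simp
      qed
    qed
  next
    assume H: "\<forall>a s. (a,i,s) \<in> E \<longrightarrow> lit x a s"
    show "\<forall>j. ((j, i, 1) \<in> E \<longrightarrow> j \<in> x) \<and> ((j, i, -1) \<in> E \<longrightarrow> j \<notin> x)"
      proof (intro allI conjI impI)
      fix j assume jj: "(j, i, 1) \<in> E" have "lit x j (1)" using H jj by blast then show "j \<in> x" unfolding lit_def by simp
    next
      fix j assume jj: "(j, i, -1) \<in> E" have "lit x j (-1)" using H jj by blast then show "j \<notin> x" unfolding lit_def by simp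
    qed
  qed
  have e2: "(\<forall>j. ((j, i, 1) \<in> E \<longrightarrow> j \<notin> x) \<and> ((j, i, -1) \<in> E \<longrightarrow> j \<in> x)) =
        (\<forall>a s. (a,i,s) \<in> E \<longrightarrow> \<not> lit x a s)" for x
  proof
    assume H: "\<forall>j. ((j, i, 1) \<in> E \<longrightarrow> j \<notin> x) \<and> ((j, i, -1) \<in> E \<longrightarrow> j \<in> x)"
    show "\<forall>a s. (a,i,s) \<in> E \<longrightarrow> \<not> lit x a s"
    proof (intro allI impI)
      fix a s assume as: "(a,i,s) \<in> E"
      from sgn[OF as] show "\<not> lit x a s"
      proof
        assume "s = 1" then show ?thesis using H as unfolding lit_def by simp
      next
        assume "s = -1" then show ?thesis using H as unfolding lit_def by simp
      qed
    qed
  next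
    assume H: "\<forall>a s. (a,i,s) \<in> E \<longrightarrow> \<not> lit x a s"
    show "\<forall>j. ((j, i, 1) \<in> E \<longrightarrow> j \<notin> x) \<and> ((j, i, -1) \<in> E \<longrightarrow> j \<in> x)"
      proof (intro allI conjI impI)
      fix j assume jj: "(j, i, 1) \<in> E" have "\<not> lit x j (1)" using H jj by blast then show "j \<notin> x" unfolding lit_def by simp
    next
      fix j assume jj: "(j, i, -1) \<in> E" have "\<not> lit x j (-1)" using H jj by blast then show "j \<in> x" unfolding lit_def by simp
    qed
  qed
  have "\<forall>i\<in>V.
        (\<forall>x. x \<subseteq> V \<longrightarrow>
           (i \<in> f x \<longleftrightarrow> (\<forall>j. ((j, i, 1) \<in> E \<longrightarrow> j \<in> x) \<and> ((j, i, -1) \<in> E \<longrightarrow> j \<notin> x))))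
      \<or> (\<forall>x. x \<subseteq> V \<longrightarrow>
           (i \<notin> f x \<longleftrightarrow> (\<forall>j. ((j, i, 1) \<in> E \<longrightarrow> j \<notin> x) \<and> ((j, i, -1) \<in> E \<longrightarrow> j \<in> x))))"
    using ao unfolding and_or_net_def by (elim conjE)
  from bspec[OF this i] show ?thesis unfolding conjtype_def e1 e2 .
qed

context
  fixes V :: "nat set" and E :: sdigraph and f :: "nat set \<Rightarrow> nat set" and \<sigma> :: "nat \<Rightarrow> int" and v :: nat
  assumes sd: "signed_digraph V E" and ao: "and_or_net V E f" and vV: "v \<in> V"
    and \<sigma>_arc: "\<And>a b s. (a,b,s) \<in> E \<Longrightarrow> b \<noteq> v \<Longrightarrow> \<sigma> b = \<sigma> a * s"
    and \<sigma>_varc: "\<And>a s. (a,v,s) \<in> E \<Longrightarrow> \<sigma> a * s = -1"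
    and \<sigma>_v: "\<sigma> v = 1"
    and \<sigma>_pm: "\<And>u. u \<in> V \<Longrightarrow> \<sigma> u = 1 \<or> \<sigma> u = -1"
    and innb: "\<And>u. u \<in> V \<Longrightarrow> \<exists>a s. (a,u,s) \<in> E"
begin

lemma arcV: "(a,b,s) \<in> E \<Longrightarrow> a \<in> V \<and> b \<in> V \<and> (s = 1 \<or> s = -1)"
  using sd unfolding signed_digraph_def by auto

lemma fV: "x \<subseteq> V \<Longrightarrow> f x \<subseteq> V"
  using ao unfolding and_or_net_def is_BN_def by auto

lemma updV: "x \<subseteq> V \<Longrightarrow> u \<in> V \<Longrightarrow> upd f u x \<subseteq> V"
  unfolding upd_def by auto

lemma lit_val:
  assumes "(a,i,s) \<in> E" "a \<in> x \<longleftrightarrow> (c \<longleftrightarrow> \<sigma> a = 1)"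
  shows "lit x a s \<longleftrightarrow> (c \<longleftrightarrow> \<sigma> a * s = 1)"
proof -
  have "a \<in> V" "s = 1 \<or> s = -1" using arcV[OF assms(1)] by auto
  moreover have "\<sigma> a = 1 \<or> \<sigma> a = -1" using \<sigma>_pm calculation by auto
  ultimately show ?thesis using assms(2) unfolding lit_def by auto
qed

lemma AO1:
  assumes i: "i \<in> V" and x: "x \<subseteq> V" and L: "\<And>a s. (a,i,s) \<in> E \<Longrightarrow> (lit x a s \<longleftrightarrow> P)"
  shows "i \<in> f x \<longleftrightarrow> P"
proof -
  obtain a0 s0 where a0: "(a0,i,s0) \<in> E" using innb[OF i] by blast
  from ao_cases[OF sd ao i] show ?thesis
  proof
    assume "conjtype V E f i"
    then have "i \<in> f x \<longleftrightarrow> (\<forall>a s. (a,i,s) \<in> E \<longrightarrow> lit x a s)" using x unfolding conjtype_def by blast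
    then show ?thesis using L a0 by blast
  next
    assume "\<forall>x. x \<subseteq> V \<longrightarrow> (i \<notin> f x \<longleftrightarrow> (\<forall>a s. (a,i,s) \<in> E \<longrightarrow> \<not> lit x a s))"
    then have "i \<notin> f x \<longleftrightarrow> (\<forall>a s. (a,i,s) \<in> E \<longrightarrow> \<not> lit x a s)" using x by blast
    then show ?thesis using L a0 by blast
  qed
qed

lemma AO2:
  assumes i: "i \<in> V" and x: "x \<subseteq> V" and a: "(a,i,s) \<in> E" "lit x a s"
    and a': "(a',i,s') \<in> E" "\<not> lit x a' s'"
  shows "i \<in> f x \<longleftrightarrow> \<not> conjtype V E f i"
proof (cases "conjtype V E f i")
  case True
  then have "i \<in> f x \<longleftrightarrow> (\<forall>a s. (a,i,s) \<in> E \<longrightarrow> lit x a s)" using x unfolding conjtype_def by blast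
  then show ?thesis using True a' by blast
next
  case False
  then have "\<forall>x. x \<subseteq> V \<longrightarrow> (i \<notin> f x \<longleftrightarrow> (\<forall>a s. (a,i,s) \<in> E \<longrightarrow> \<not> lit x a s))"
    using ao_cases[OF sd ao i] by blast
  then have "i \<notin> f x \<longleftrightarrow> (\<forall>a s. (a,i,s) \<in> E \<longrightarrow> \<not> lit x a s)" using x by blast
  then show ?thesis using False a by blast
qed

lemma sweep_val:
  assumes "topo V E v A S" "x \<subseteq> V" "\<forall>u\<in>A. u \<in> x \<longleftrightarrow> (c \<longleftrightarrow> \<sigma> u = 1)"
  shows "upd_word f S x \<subseteq> V \<and> (\<forall>u\<in>A \<union> set S. u \<in> upd_word f S x \<longleftrightarrow> (c \<longleftrightarrow> \<sigma> u = 1))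
     \<and> (\<forall>u. u \<notin> A \<union> set S \<longrightarrow> (u \<in> upd_word f S x \<longleftrightarrow> u \<in> x))"
  using assms
proof (induction S arbitrary: A x)
  case Nil
  then show ?case by (simp add: upd_word_Nil)
next
  case (Cons u S)
  have uV: "u \<in> V" and uv: "u \<noteq> v" and inA: "\<And>a s. (a,u,s) \<in> E \<Longrightarrow> a \<in> A"
    and tp: "topo V E v (insert u A) S" using Cons.prems(1) by auto
  have fu: "u \<in> f x \<longleftrightarrow> (c \<longleftrightarrow> \<sigma> u = 1)"
  proof (rule AO1[OF uV Cons.prems(2)])
    fix a s assume as: "(a,u,s) \<in> E"
    have "lit x a s \<longleftrightarrow> (c \<longleftrightarrow> \<sigma> a * s = 1)"
      using lit_val[OF as] inA[OF as] Cons.prems(3) by blast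
    then show "lit x a s \<longleftrightarrow> (c \<longleftrightarrow> \<sigma> u = 1)" using \<sigma>_arc[OF as uv] by simp
  qed
  define x' where "x' = upd f u x"
  have x'V: "x' \<subseteq> V" unfolding x'_def using updV[OF Cons.prems(2) uV] .
  have x'u: "u \<in> x' \<longleftrightarrow> (c \<longleftrightarrow> \<sigma> u = 1)" unfolding x'_def upd_def using fu by auto
  have x'o: "w \<noteq> u \<Longrightarrow> (w \<in> x' \<longleftrightarrow> w \<in> x)" for w unfolding x'_def upd_def by auto
  have "\<forall>w\<in>insert u A. w \<in> x' \<longleftrightarrow> (c \<longleftrightarrow> \<sigma> w = 1)"
  proof
    fix w assume w: "w \<in> insert u A"
    show "w \<in> x' \<longleftrightarrow> (c \<longleftrightarrow> \<sigma> w = 1)"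
    proof (cases "w = u")
      case True then show ?thesis using x'u by simp
    next
      case False then have "w \<in> A" using w by simp
      then show ?thesis using x'o[OF False] Cons.prems(3) by simp
    qed
  qed
  from Cons.IH[OF tp x'V this] show ?case using x'o unfolding upd_word_Cons x'_def[symmetric] by auto
qed

lemma phase:
  assumes S: "topo V E v {v} S" "set S = V - {v}"
    and T: "topo V E v {v} T" "set T = W" "W \<subseteq> V - {v}"
    and a1: "(a1, v, s1) \<in> E" "a1 \<in> W \<union> {v}"
    and a2: "(a2, v, s2) \<in> E" "a2 \<in> V - {v} - W"
    and x: "x \<subseteq> V"
  shows "upd_word f (S @ [v] @ T @ [v] @ S) x = {u \<in> V. (\<not> conjtype V E f v) \<longleftrightarrow> \<sigma> u = 1}"
proof -
  define c where "c = (v \<in> x)"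
  define y1 where "y1 = upd_word f S x"
  have "\<forall>u\<in>{v}. u \<in> x \<longleftrightarrow> (c \<longleftrightarrow> \<sigma> u = 1)" using \<sigma>_v c_def by simp
  from sweep_val[OF S(1) x this] S(2) vV
  have y1V: "y1 \<subseteq> V" and y1: "\<forall>u\<in>V. u \<in> y1 \<longleftrightarrow> (c \<longleftrightarrow> \<sigma> u = 1)" unfolding y1_def by auto
  have fv1: "v \<in> f y1 \<longleftrightarrow> \<not> c"
  proof (rule AO1[OF vV y1V])
    fix a s assume as: "(a,v,s) \<in> E"
    have "lit y1 a s \<longleftrightarrow> (c \<longleftrightarrow> \<sigma> a * s = 1)"
      using lit_val[OF as] y1 arcV[OF as] by blast
    then show "lit y1 a s \<longleftrightarrow> \<not> c" using \<sigma>_varc[OF as] by simp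
  qed
  define y2 where "y2 = upd f v y1"
  have y2V: "y2 \<subseteq> V" unfolding y2_def using updV[OF y1V vV] .
  have y2v: "v \<in> y2 \<longleftrightarrow> (\<not> c \<longleftrightarrow> \<sigma> v = 1)" unfolding y2_def upd_def using fv1 \<sigma>_v by auto
  have y2o: "\<forall>u\<in>V - {v}. u \<in> y2 \<longleftrightarrow> (c \<longleftrightarrow> \<sigma> u = 1)" unfolding y2_def upd_def using y1 by auto
  define y3 where "y3 = upd_word f T y2"
  have "\<forall>u\<in>{v}. u \<in> y2 \<longleftrightarrow> (\<not> c \<longleftrightarrow> \<sigma> u = 1)" using y2v by simp
  from sweep_val[OF T(1) y2V this] T(2)
  have y3V: "y3 \<subseteq> V" and y3W: "\<forall>u\<in>W \<union> {v}. u \<in> y3 \<longleftrightarrow> (\<not> c \<longleftrightarrow> \<sigma> u = 1)"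
    and y3o: "\<forall>u. u \<notin> W \<union> {v} \<longrightarrow> (u \<in> y3 \<longleftrightarrow> u \<in> y2)" unfolding y3_def by auto
  have l1: "lit y3 a1 s1 \<longleftrightarrow> c"
  proof -
    have "lit y3 a1 s1 \<longleftrightarrow> (\<not> c \<longleftrightarrow> \<sigma> a1 * s1 = 1)" using lit_val[OF a1(1)] y3W a1(2) by blast
    then show ?thesis using \<sigma>_varc[OF a1(1)] by simp
  qed
  have l2: "lit y3 a2 s2 \<longleftrightarrow> \<not> c"
  proof -
    have "a2 \<in> y3 \<longleftrightarrow> (c \<longleftrightarrow> \<sigma> a2 = 1)" using y3o y2o a2(2) by auto
    then have "lit y3 a2 s2 \<longleftrightarrow> (c \<longleftrightarrow> \<sigma> a2 * s2 = 1)" using lit_val[OF a2(1)] by blast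
    then show ?thesis using \<sigma>_varc[OF a2(1)] by simp
  qed
  have fv3: "v \<in> f y3 \<longleftrightarrow> \<not> conjtype V E f v"
  proof (cases c)
    case True then show ?thesis using AO2[OF vV y3V a1(1) _ a2(1)] l1 l2 by blast
  next
    case False then show ?thesis using AO2[OF vV y3V a2(1) _ a1(1)] l1 l2 by blast
  qed
  define y4 where "y4 = upd f v y3"
  define K where "K = (\<not> conjtype V E f v)"
  have y4V: "y4 \<subseteq> V" unfolding y4_def using updV[OF y3V vV] .
  have "\<forall>u\<in>{v}. u \<in> y4 \<longleftrightarrow> (K \<longleftrightarrow> \<sigma> u = 1)" unfolding y4_def upd_def K_def using fv3 \<sigma>_v by auto
  from sweep_val[OF S(1) y4V this] S(2) vV
  have y5V: "upd_word f S y4 \<subseteq> V" and y5: "\<forall>u\<in>V. u \<in> upd_word f S y4 \<longleftrightarrow> (K \<longleftrightarrow> \<sigma> u = 1)" by auto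
  have "upd_word f (S @ [v] @ T @ [v] @ S) x = upd_word f S y4"
    unfolding y4_def y3_def y2_def y1_def upd_word_append upd_word_Cons upd_word_Nil by simp
  also have "\<dots> = {u \<in> V. K \<longleftrightarrow> \<sigma> u = 1}" using y5V y5 by auto
  finally show ?thesis unfolding K_def .
qed

end



definition RD :: "nat set \<Rightarrow> sdigraph \<Rightarrow> nat \<Rightarrow> (nat \<times> nat) set" where
  "RD V E v = {(a,b). a \<in> V - {v} \<and> b \<in> V - {v} \<and> (\<exists>s. (a,b,s) \<in> E)}"

inductive rw :: "sdigraph \<Rightarrow> nat \<Rightarrow> nat list \<Rightarrow> int list \<Rightarrow> bool" for E v where
  rw_base: "rw E v [v] []"
| rw_step: "rw E v vs ss \<Longrightarrow> (last vs, b, s) \<in> E \<Longrightarrow> b \<noteq> v \<Longrightarrow> rw E v (vs @ [b]) (ss @ [s])"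

definition reach :: "sdigraph \<Rightarrow> nat \<Rightarrow> nat \<Rightarrow> int \<Rightarrow> bool" where
  "reach E v u p = (\<exists>vs ss. rw E v vs ss \<and> last vs = u \<and> p = prod_list ss)"

lemma prod_pm: "set ss \<subseteq> {1, -1::int} \<Longrightarrow> prod_list ss = 1 \<or> prod_list ss = -1"
  by (induction ss) auto

lemma hd_last_distinct: "distinct xs \<Longrightarrow> length xs \<ge> 2 \<Longrightarrow> hd xs \<noteq> last xs"
  by (cases xs) (auto simp: last_conv_nth nth_eq_iff_index_eq)

context
  fixes V :: "nat set" and E :: sdigraph and v :: nat
  assumes sd: "signed_digraph V E" and sc: "strongly_connected V E"
    and npc: "no_positive_cycle E" and fvs: "feedback_vertex_set V E {v}"
    and vV: "v \<in> V" and finV: "finite V"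
begin

lemma arcV': "(a,b,s) \<in> E \<Longrightarrow> a \<in> V \<and> b \<in> V \<and> (s = 1 \<or> s = -1)"
  using sd unfolding signed_digraph_def by auto

lemma acyc: "(x,x) \<notin> (RD V E v)\<^sup>+"
proof
  assume "(x,x) \<in> (RD V E v)\<^sup>+"
  from cycle_from_trancl[OF this, of "V - {v}" E]
  obtain vs ss where "is_cycle E vs ss" "set vs \<subseteq> V - {v}" unfolding RD_def by blast
  then show False using fvs unfolding feedback_vertex_set_def by blast
qed

lemma rw_inv:
  assumes "rw E v vs ss"
  shows "length vs = Suc (length ss) \<and> hd vs = v \<and> distinct vs \<and>
    (\<forall>t<length ss. (vs!t, vs!(Suc t), ss!t) \<in> E) \<and> set (tl vs) \<subseteq> V - {v} \<and>
    (\<forall>x\<in>set (tl vs). (x, last vs) \<in> (RD V E v)\<^sup>*) \<and> set ss \<subseteq> {1, -1}"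
  using assms
proof (induction rule: rw.induct)
  case rw_base
  then show ?case by simp
next
  case (rw_step vs ss b s)
  define l where "l = last vs"
  have len: "length vs = Suc (length ss)" and hdv: "hd vs = v" and dis: "distinct vs"
    and arcs: "\<forall>t<length ss. (vs!t, vs!(Suc t), ss!t) \<in> E" and tlD: "set (tl vs) \<subseteq> V - {v}"
    and rch: "\<forall>x\<in>set (tl vs). (x, l) \<in> (RD V E v)\<^sup>*" and sg: "set ss \<subseteq> {1, -1}"
    using rw_step.IH unfolding l_def by auto
  have ne: "vs \<noteq> []" using len by auto
  have bD: "b \<in> V - {v}" using arcV'[OF rw_step.hyps(2)] rw_step.hyps(3) by auto
  have lD: "tl vs \<noteq> [] \<Longrightarrow> l \<in> V - {v}"
  proof -
    assume "tl vs \<noteq> []"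
    then have "l \<in> set (tl vs)" unfolding l_def using ne by (metis last_in_set last_tl)
    then show ?thesis using tlD by auto
  qed
  have vs_eq: "vs = hd vs # tl vs" using ne by simp
  have bnot: "b \<notin> set vs"
  proof
    assume "b \<in> set vs"
    then have "b \<in> set (tl vs)" using vs_eq hdv rw_step.hyps(3) by (metis set_ConsD)
    then have tlne: "tl vs \<noteq> []" by auto
    have "(b, l) \<in> (RD V E v)\<^sup>*" using rch \<open>b \<in> set (tl vs)\<close> by blast
    moreover have "(l, b) \<in> RD V E v" using lD[OF tlne] bD rw_step.hyps(2) unfolding RD_def l_def by blast
    ultimately have "(b,b) \<in> (RD V E v)\<^sup>+" by (rule rtrancl_into_trancl1)
    then show False using acyc by blast
  qed
  have tl_app: "tl (vs @ [b]) = tl vs @ [b]" using ne by simp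
  show ?case
  proof (intro conjI)
    show "length (vs @ [b]) = Suc (length (ss @ [s]))" using len by simp
    show "hd (vs @ [b]) = v" using hdv ne by simp
    show "distinct (vs @ [b])" using dis bnot by simp
    show "\<forall>t<length (ss @ [s]). ((vs @ [b]) ! t, (vs @ [b]) ! Suc t, (ss @ [s]) ! t) \<in> E"
    proof (intro allI impI)
      fix t assume t: "t < length (ss @ [s])"
      show "((vs @ [b]) ! t, (vs @ [b]) ! Suc t, (ss @ [s]) ! t) \<in> E"
      proof (cases "t < length ss")
        case True
        then show ?thesis using arcs len by (simp add: nth_append)
      next
        case False
        then have tt: "t = length ss" using t by simp
        have "vs ! t = l" unfolding l_def using tt len ne by (simp add: last_conv_nth)
        then show ?thesis using tt len rw_step.hyps(2) unfolding l_def by (simp add: nth_append)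
      qed
    qed
    show "set (tl (vs @ [b])) \<subseteq> V - {v}" using tl_app tlD bD by auto
    show "\<forall>x\<in>set (tl (vs @ [b])). (x, last (vs @ [b])) \<in> (RD V E v)\<^sup>*"
    proof
      fix x assume "x \<in> set (tl (vs @ [b]))"
      then have "x \<in> set (tl vs) \<or> x = b" using tl_app by auto
      then show "(x, last (vs @ [b])) \<in> (RD V E v)\<^sup>*"
      proof
        assume xs: "x \<in> set (tl vs)"
        then have tlne: "tl vs \<noteq> []" by auto
        have "(l, b) \<in> RD V E v" using lD[OF tlne] bD rw_step.hyps(2) unfolding RD_def l_def by blast
        moreover have "(x, l) \<in> (RD V E v)\<^sup>*" using rch xs by blast
        ultimately have "(x, b) \<in> (RD V E v)\<^sup>*" by (meson rtrancl_into_rtrancl)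
        then show ?thesis by simp
      qed simp
    qed
    show "set (ss @ [s]) \<subseteq> {1, -1}" using sg arcV'[OF rw_step.hyps(2)] by auto
  qed
qed

lemma rw_cycle:
  assumes "rw E v vs ss" "(last vs, v, s) \<in> E"
  shows "is_cycle E vs (ss @ [s])"
proof -
  have len: "length vs = Suc (length ss)" and hdv: "hd vs = v" and dis: "distinct vs"
    and arcs: "\<forall>t<length ss. (vs!t, vs!(Suc t), ss!t) \<in> E"
    using rw_inv[OF assms(1)] by auto
  have ne: "vs \<noteq> []" using len by auto
  show ?thesis unfolding is_cycle_def
  proof (intro conjI allI impI)
    show "vs \<noteq> []" "distinct vs" "length (ss @ [s]) = length vs" using ne dis len by auto
    fix t assume t: "t < length vs"
    show "(vs ! t, vs ! ((t + 1) mod length vs), (ss @ [s]) ! t) \<in> E"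
    proof (cases "t < length ss")
      case True
      then show ?thesis using arcs len by (simp add: nth_append)
    next
      case False
      then have tt: "t = length ss" using t len by simp
      have "vs ! t = last vs" using tt len ne by (simp add: last_conv_nth)
      moreover have "vs ! ((t + 1) mod length vs) = v" using tt len hdv ne by (simp add: hd_conv_nth)
      ultimately show ?thesis using tt assms(2) by (simp add: nth_append)
    qed
  qed
qed

lemma reach_pm: "reach E v u p \<Longrightarrow> p = 1 \<or> p = -1"
  unfolding reach_def using rw_inv prod_pm by blast

lemma R1: "reach E v v 1"
  unfolding reach_def using rw_base by force

lemma R1': "reach E v v p \<Longrightarrow> p = 1"
proof -
  assume "reach E v v p"
  then obtain vs ss where r: "rw E v vs ss" "last vs = v" "p = prod_list ss" unfolding reach_def by blast
  have len: "length vs = Suc (length ss)" and hdv: "hd vs = v" and dis: "distinct vs"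
    using rw_inv[OF r(1)] by auto
  have "\<not> length vs \<ge> 2" using hd_last_distinct[OF dis] hdv r(2) by auto
  then have "ss = []" using len by (cases ss) auto
  then show "p = 1" using r(3) by simp
qed

lemma R2: "reach E v a p \<Longrightarrow> (a,b,s) \<in> E \<Longrightarrow> b \<noteq> v \<Longrightarrow> reach E v b (p * s)"
proof -
  assume "reach E v a p" "(a,b,s) \<in> E" "b \<noteq> v"
  then obtain vs ss where r: "rw E v vs ss" "last vs = a" "p = prod_list ss" unfolding reach_def by blast
  have "rw E v (vs @ [b]) (ss @ [s])" using rw_step[OF r(1)] r(2) \<open>(a,b,s) \<in> E\<close> \<open>b \<noteq> v\<close> by blast
  then show ?thesis unfolding reach_def using r(3) by force
qed

lemma R3: "reach E v a p \<Longrightarrow> (a,v,s) \<in> E \<Longrightarrow> p * s = -1"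
proof -
  assume "reach E v a p" and as: "(a,v,s) \<in> E"
  then obtain vs ss where r: "rw E v vs ss" "last vs = a" "p = prod_list ss" unfolding reach_def by blast
  have "is_cycle E vs (ss @ [s])" using rw_cycle[OF r(1)] r(2) as by blast
  then have "prod_list (ss @ [s]) \<noteq> 1" using npc unfolding no_positive_cycle_def cycle_sign_def by blast
  moreover have "prod_list (ss @ [s]) = p * s" using r(3) by simp
  moreover have "p = 1 \<or> p = -1" using reach_pm \<open>reach E v a p\<close> by blast
  moreover have "s = 1 \<or> s = -1" using arcV'[OF as] by blast
  ultimately show ?thesis by auto
qed

lemma sc': "u \<in> V \<Longrightarrow> w \<in> V \<Longrightarrow> (u, w) \<in> {(a, b). \<exists>s. (a, b, s) \<in> E}\<^sup>*"
  using sc unfolding strongly_connected_def by blast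

lemma R4: "u \<in> V \<Longrightarrow> \<exists>p. reach E v u p"
proof -
  assume "u \<in> V"
  have "(v, u) \<in> {(a, b). \<exists>s. (a, b, s) \<in> E}\<^sup>*" using sc' vV \<open>u \<in> V\<close> by blast
  then show ?thesis
  proof (induction rule: rtrancl_induct)
    case base
    then show ?case using R1 by blast
  next
    case (step y z)
    then obtain p s where "reach E v y p" "(y,z,s) \<in> E" by blast
    then show ?case using R1 R2 by (cases "z = v") blast+
  qed
qed

lemma R5: "u \<in> V \<Longrightarrow> reach E v u p \<Longrightarrow> reach E v u p' \<Longrightarrow> p = p'"
proof -
  assume "u \<in> V"
  have "(u, v) \<in> {(a, b). \<exists>s. (a, b, s) \<in> E}\<^sup>*" using sc' vV \<open>u \<in> V\<close> by blast
  then have "\<forall>p p'. reach E v u p \<longrightarrow> reach E v u p' \<longrightarrow> p = p'"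
  proof (induction rule: converse_rtrancl_induct)
    case base
    then show ?case using R1' by auto
  next
    case (step y z)
    then obtain s where ys: "(y,z,s) \<in> E" by blast
    have s: "s = 1 \<or> s = -1" using arcV'[OF ys] by blast
    show ?case
    proof (intro allI impI)
      fix p p' assume p: "reach E v y p" and p': "reach E v y p'"
      show "p = p'"
      proof (cases "z = v")
        case True
        then have "p * s = -1" "p' * s = -1" using R3 p p' ys by blast+
        then show ?thesis using s by auto
      next
        case False
        then have "p * s = p' * s" using step.IH R2[OF p ys] R2[OF p' ys] by blast
        then show ?thesis using s by auto
      qed
    qed
  qed
  then show "reach E v u p \<Longrightarrow> reach E v u p' \<Longrightarrow> p = p'" by blast
qed

lemma sigma_exists:
  "\<exists>\<sigma>. (\<forall>a b s. (a,b,s) \<in> E \<longrightarrow> b \<noteq> v \<longrightarrow> \<sigma> b = \<sigma> a * s) \<and>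
       (\<forall>a s. (a,v,s) \<in> E \<longrightarrow> \<sigma> a * s = -1) \<and> \<sigma> v = 1 \<and> (\<forall>u\<in>V. \<sigma> u = 1 \<or> \<sigma> u = -1)"
proof -
  define \<sigma> where "\<sigma> u = (SOME p. reach E v u p)" for u
  have r: "u \<in> V \<Longrightarrow> reach E v u (\<sigma> u)" for u unfolding \<sigma>_def using R4 by (metis someI)
  show ?thesis
  proof (intro exI conjI allI impI ballI)
    fix a b s assume as: "(a,b,s) \<in> E" "b \<noteq> v"
    have "a \<in> V" "b \<in> V" using arcV'[OF as(1)] by auto
    then show "\<sigma> b = \<sigma> a * s" using R5 r R2[OF r[OF \<open>a \<in> V\<close>] as] by blast
  next
    fix a s assume as: "(a,v,s) \<in> E"
    have "a \<in> V" using arcV'[OF as] by auto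
    then show "\<sigma> a * s = -1" using R3 r as by blast
  next
    show "\<sigma> v = 1" using R1' r vV by blast
  next
    fix u assume "u \<in> V" then show "\<sigma> u = 1 \<or> \<sigma> u = -1" using reach_pm r by blast
  qed
qed

lemma no_double: "(a,b,s) \<in> E \<Longrightarrow> (a,b,s') \<in> E \<Longrightarrow> s = s'"
proof -
  assume as: "(a,b,s) \<in> E" "(a,b,s') \<in> E"
  obtain \<sigma> where \<sigma>: "\<forall>a b s. (a,b,s) \<in> E \<longrightarrow> b \<noteq> v \<longrightarrow> \<sigma> b = \<sigma> a * s"
       "\<forall>a s. (a,v,s) \<in> E \<longrightarrow> \<sigma> a * s = -1" "\<forall>u\<in>V. \<sigma> u = 1 \<or> \<sigma> u = -1"
    using sigma_exists by blast
  have "\<sigma> a = 1 \<or> \<sigma> a = -1" using \<sigma>(3) arcV'[OF as(1)] by blast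
  moreover have "\<sigma> a * s = \<sigma> a * s'"
  proof (cases "b = v")
    case True then have "\<sigma> a * s = -1" "\<sigma> a * s' = -1" using \<sigma>(2) as by auto
    then show ?thesis by metis
  next
    case False then have "\<sigma> b = \<sigma> a * s" "\<sigma> b = \<sigma> a * s'" using \<sigma>(1) as by blast+
    then show ?thesis by metis
  qed
  moreover have "\<sigma> a \<noteq> 0" using calculation(1) by auto
  ultimately show "s = s'" by simp
qed

lemma topo_exists:
  assumes "W \<subseteq> V - {v}" "\<forall>w\<in>W. \<forall>a s. (a,w,s) \<in> E \<longrightarrow> a \<noteq> v \<longrightarrow> a \<in> W"
  shows "\<exists>T. topo V E v {v} T \<and> set T = W \<and> distinct T"
  using assms
proof (induction "card W" arbitrary: W rule: less_induct)
  case less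
  show ?case
  proof (cases "W = {}")
    case True
    then show ?thesis by (intro exI[of _ "[]"]) simp
  next
    case False
    then obtain w0 where "w0 \<in> W" by blast
    have "RD V E v \<subseteq> V \<times> V" unfolding RD_def by auto
    then have finRD: "finite (RD V E v)" using finV by (meson finite_SigmaI finite_subset)
    have "acyclic (RD V E v)" using acyc unfolding acyclic_def by blast
    then have "wf ((RD V E v)\<inverse>)" using finRD by (simp add: finite_acyclic_wf acyclic_converse)
    then obtain z where zW: "z \<in> W" and zmax: "\<And>y. (y, z) \<in> (RD V E v)\<inverse> \<Longrightarrow> y \<notin> W"
      using wfE_min[OF _ \<open>w0 \<in> W\<close>] by metis
    define W' where "W' = W - {z}"
    have finW: "finite W" using less.prems(1) finV by (meson finite_Diff finite_subset)
    have card: "card W' < card W" unfolding W'_def using finW zW by (rule card_Diff1_less)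
    have cl: "\<forall>w\<in>W'. \<forall>a s. (a,w,s) \<in> E \<longrightarrow> a \<noteq> v \<longrightarrow> a \<in> W'"
    proof (intro ballI allI impI)
      fix w a s assume w: "w \<in> W'" and as: "(a,w,s) \<in> E" "a \<noteq> v"
      have aW: "a \<in> W" using less.prems(2) w as unfolding W'_def by blast
      have "a \<noteq> z"
      proof
        assume "a = z"
        then have "(w, z) \<in> (RD V E v)\<inverse>" using as aW w less.prems(1) unfolding RD_def W'_def by blast
        then show False using zmax w unfolding W'_def by blast
      qed
      then show "a \<in> W'" using aW unfolding W'_def by blast
    qed
    obtain T' where T': "topo V E v {v} T'" "set T' = W'" "distinct T'"
      using less.hyps[OF card _ cl] less.prems(1) unfolding W'_def by blast
    have ztopo: "topo V E v ({v} \<union> set T') [z]"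
    proof -
      have "z \<in> V" "z \<noteq> v" using zW less.prems(1) by auto
      moreover have "a \<in> {v} \<union> set T'" if as: "(a,z,s) \<in> E" for a s
      proof (cases "a = v")
        case False
        then have aW: "a \<in> W" using less.prems(2) zW as by blast
        have "a \<noteq> z"
        proof
          assume "a = z"
          then have "(z,z) \<in> RD V E v" using as zW less.prems(1) unfolding RD_def by blast
          then show False using acyc by blast
        qed
        then show ?thesis using aW T'(2) unfolding W'_def by blast
      qed simp
      ultimately show ?thesis by simp
    qed
    show ?thesis
    proof (intro exI conjI)
      show "topo V E v {v} (T' @ [z])" using T'(1) ztopo by (simp add: topo_append)
      show "set (T' @ [z]) = W" using T'(2) zW unfolding W'_def by auto
      show "distinct (T' @ [z])" using T'(2,3) unfolding W'_def by simp
    qed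
  qed
qed

end



lemma innb_exists:
  assumes sc: "strongly_connected V E" and u: "u \<in> V" and w: "w \<in> V" "w \<noteq> u"
  shows "\<exists>a s. (a,u,s) \<in> E"
proof -
  have "(w,u) \<in> {(a, b). \<exists>s. (a, b, s) \<in> E}\<^sup>*" using sc u w unfolding strongly_connected_def by blast
  then show ?thesis using w(2) by (cases rule: rtranclE) auto
qed

lemma pred_in_cycle:
  assumes c: "is_cycle E vs ss" and b: "b \<in> set vs"
  shows "\<exists>t<length vs. (vs!t, b, ss!t) \<in> E \<and> vs!((t+1) mod length vs) = b"
proof -
  define k where "k = length vs"
  obtain t0 where t0: "t0 < k" "vs!t0 = b" using b unfolding k_def by (metis in_set_conv_nth)
  define t where "t = (if t0 = 0 then k - 1 else t0 - 1)"
  have tk: "t < k" unfolding t_def using t0 by auto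
  have "(t + 1) mod k = t0" unfolding t_def using t0 by auto
  moreover have "(vs!t, vs!((t+1) mod k), ss!t) \<in> E" using c tk unfolding is_cycle_def k_def by blast
  ultimately show ?thesis using tk t0 unfolding k_def by auto
qed

lemma choose_W:
  assumes sd: "signed_digraph V E" and sc: "strongly_connected V E"
    and npc: "no_positive_cycle E" and fvs: "feedback_vertex_set V E {v}"
    and vV: "v \<in> V" and finV: "finite V"
    and a: "a1 \<noteq> a2" "(a1,v,s1) \<in> E" "(a2,v,s2) \<in> E"
  shows "\<exists>W b1 t1 b2 t2. W \<subseteq> V - {v} \<and> (\<forall>w\<in>W. \<forall>a s. (a,w,s) \<in> E \<longrightarrow> a \<noteq> v \<longrightarrow> a \<in> W)
     \<and> (b1,v,t1) \<in> E \<and> b1 \<in> W \<union> {v} \<and> (b2,v,t2) \<in> E \<and> b2 \<in> V - {v} - W"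
proof -
  note arcV = arcV'[OF sd sc npc fvs vV finV]
  note acyc = acyc[OF sd sc npc fvs vV finV]
  let ?R = "RD V E v"
  have gen: "\<exists>W b1 t1 b2 t2. W \<subseteq> V - {v} \<and> (\<forall>w\<in>W. \<forall>a s. (a,w,s) \<in> E \<longrightarrow> a \<noteq> v \<longrightarrow> a \<in> W)
     \<and> (b1,v,t1) \<in> E \<and> b1 \<in> W \<union> {v} \<and> (b2,v,t2) \<in> E \<and> b2 \<in> V - {v} - W"
    if p: "(p,v,sp) \<in> E" "p \<noteq> v" and q: "(q,v,sq) \<in> E" "q \<noteq> v" and nqp: "(q,p) \<notin> ?R\<^sup>*" for p q sp sq
  proof -
    define W where "W = {x \<in> V - {v}. (x,p) \<in> ?R\<^sup>*}"
    have "p \<in> W" unfolding W_def using arcV[OF p(1)] p(2) by blast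
    moreover have "q \<in> V - {v} - W" unfolding W_def using arcV[OF q(1)] q(2) nqp by blast
    moreover have "\<forall>w\<in>W. \<forall>a s. (a,w,s) \<in> E \<longrightarrow> a \<noteq> v \<longrightarrow> a \<in> W"
    proof (intro ballI allI impI)
      fix w a s assume w: "w \<in> W" and as: "(a,w,s) \<in> E" "a \<noteq> v"
      have "(a,w) \<in> ?R" using w as arcV[OF as(1)] unfolding W_def RD_def by blast
      moreover have "(w,p) \<in> ?R\<^sup>*" using w unfolding W_def by blast
      ultimately have "(a,p) \<in> ?R\<^sup>*" by (rule converse_rtrancl_into_rtrancl)
      then show "a \<in> W" unfolding W_def using arcV[OF as(1)] as(2) by blast
    qed
    moreover have "W \<subseteq> V - {v}" unfolding W_def by blast
    ultimately show ?thesis using p q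
      by (intro exI[of _ W] exI[of _ p] exI[of _ sp] exI[of _ q] exI[of _ sq]) simp
  qed
  show ?thesis
  proof (cases "a1 = v")
    case True
    then show ?thesis using a arcV[OF a(3)]
      by (intro exI[of _ "{}"] exI[of _ a1] exI[of _ s1] exI[of _ a2] exI[of _ s2]) auto
  next
    case F1: False
    show ?thesis
    proof (cases "a2 = v")
      case True
      then show ?thesis using a F1 arcV[OF a(2)]
        by (intro exI[of _ "{}"] exI[of _ a2] exI[of _ s2] exI[of _ a1] exI[of _ s1]) auto
    next
      case F2: False
      show ?thesis
      proof (cases "(a2,a1) \<in> ?R\<^sup>*")
        case False
        then show ?thesis using gen[OF a(2) F1 a(3) F2] by blast
      next
        case True
        have "(a1,a2) \<notin> ?R\<^sup>*"
        proof
          assume "(a1,a2) \<in> ?R\<^sup>*"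
          then have "(a1,a2) \<in> ?R\<^sup>+" using a(1) by (meson rtranclD)
          then have "(a1,a1) \<in> ?R\<^sup>+" using True by (meson trancl_rtrancl_trancl)
          then show False using acyc by blast
        qed
        then show ?thesis using gen[OF a(3) F2 a(2) F1] by blast
      qed
    qed
  qed
qed

lemma fvs_of_tau:
  assumes sd: "signed_digraph {1..n} E" and t: "tau {1..n} E \<le> 1" and n: "n \<ge> 1"
  shows "\<exists>v\<in>{1..n}. feedback_vertex_set {1..n} E {v}"
proof -
  have "feedback_vertex_set {1..n} E {1..n}"
    unfolding feedback_vertex_set_def is_cycle_def
  proof (intro conjI allI impI)
    fix vs ss assume c: "vs \<noteq> [] \<and> distinct vs \<and> length ss = length vs \<and>
        (\<forall>t<length vs. (vs ! t, vs ! ((t + 1) mod length vs), ss ! t) \<in> E)"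
    then have "(vs ! 0, vs ! ((0 + 1) mod length vs), ss ! 0) \<in> E" by auto
    then have "vs ! 0 \<in> {1..n}" using sd unfolding signed_digraph_def by auto
    moreover have "vs ! 0 \<in> set vs" using c by auto
    ultimately show "set vs \<inter> {1..n} \<noteq> {}" by blast
  qed simp
  then have "\<exists>k F. feedback_vertex_set {1..n} E F \<and> card F = k" by blast
  then have "\<exists>F. feedback_vertex_set {1..n} E F \<and> card F = tau {1..n} E"
    unfolding tau_def by (rule LeastI_ex)
  then obtain F where F: "feedback_vertex_set {1..n} E F" "card F \<le> 1" using t by auto
  have finF: "finite F" using F(1) unfolding feedback_vertex_set_def by (meson finite_atLeastAtMost finite_subset)
  show ?thesis
  proof (cases "F = {}")
    case True
    then have "feedback_vertex_set {1..n} E {1}" using F(1) n unfolding feedback_vertex_set_def by auto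
    then show ?thesis using n by auto
  next
    case False
    then have "card F \<noteq> 0" using finF by simp
    then have "card F = 1" using F(2) by linarith
    then obtain v where "F = {v}" by (rule card_1_singletonE)
    then have "v \<in> {1..n}" using F(1) unfolding feedback_vertex_set_def by auto
    then show ?thesis using F(1) \<open>F = {v}\<close> by blast
  qed
qed



lemma exists_good_v:
  assumes sd: "signed_digraph V E" and sc: "strongly_connected V E"
    and npc: "no_positive_cycle E" and ncyc: "\<not> graph_is_cycle V E" and finV: "finite V"
    and two: "\<And>u. u \<in> V \<Longrightarrow> \<exists>w\<in>V. w \<noteq> u"
    and v0: "v0 \<in> V" "feedback_vertex_set V E {v0}"
  shows "\<exists>v\<in>V. feedback_vertex_set V E {v} \<and> (\<exists>a1 a2 s1 s2. a1 \<noteq> a2 \<and> (a1,v,s1) \<in> E \<and> (a2,v,s2) \<in> E)"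
proof (rule ccontr)
  assume "\<not> ?thesis"
  then have H: "\<And>w a1 a2 s1 s2. w \<in> V \<Longrightarrow> feedback_vertex_set V E {w} \<Longrightarrow> (a1,w,s1) \<in> E \<Longrightarrow> (a2,w,s2) \<in> E \<Longrightarrow> a1 = a2"
    by blast
  let ?R = "{(a, b). \<exists>s. (a, b, s) \<in> E}"
  have arcV: "\<And>a b s. (a,b,s) \<in> E \<Longrightarrow> a \<in> V \<and> b \<in> V \<and> (s = 1 \<or> s = -1)"
    using sd unfolding signed_digraph_def by auto
  have nd: "\<And>a b s s'. (a,b,s) \<in> E \<Longrightarrow> (a,b,s') \<in> E \<Longrightarrow> s = s'"
    using no_double[OF sd sc npc v0(2) v0(1) finV] by blast
  have scR: "\<And>u w. u \<in> V \<Longrightarrow> w \<in> V \<Longrightarrow> (u,w) \<in> ?R\<^sup>*" using sc unfolding strongly_connected_def by blast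
  have Fcl: "feedback_vertex_set V E {u}" if w: "w \<in> V" "feedback_vertex_set V E {w}" and uw: "(u,w,s) \<in> E" for u w s
    unfolding feedback_vertex_set_def
  proof (intro conjI allI impI)
    show "{u} \<subseteq> V" using arcV[OF uw] by blast
    fix vs ss assume c: "is_cycle E vs ss"
    have "w \<in> set vs" using w(2) c unfolding feedback_vertex_set_def by blast
    then obtain t where t: "t < length vs" "(vs!t, w, ss!t) \<in> E" using pred_in_cycle[OF c] by blast
    have "vs!t = u" using H[OF w t(2) uw] .
    then show "set vs \<inter> {u} \<noteq> {}" using t(1) by (metis disjoint_iff_not_equal insertI1 nth_mem)
  qed
  have allF: "feedback_vertex_set V E {u}" if u: "u \<in> V" for u
  proof -
    have "(u, v0) \<in> ?R\<^sup>*" using scR u v0(1) by blast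
    then have "u \<in> V \<and> feedback_vertex_set V E {u}"
    proof (induction rule: converse_rtrancl_induct)
      case base
      then show ?case using v0 by blast
    next
      case (step y z)
      then obtain s where "(y,z,s) \<in> E" by blast
      then show ?case using Fcl step.IH arcV by blast
    qed
    then show ?thesis by blast
  qed
  obtain a s where as: "(a, v0, s) \<in> E" using two[OF v0(1)] innb_exists[OF sc v0(1)] by blast
  have "(v0, a) \<in> ?R\<^sup>*" using scR v0(1) arcV[OF as] by blast
  moreover have "(a, v0) \<in> ?R" using as by blast
  ultimately have "(v0, v0) \<in> ?R\<^sup>+" by (rule rtrancl_into_trancl1)
  from cycle_from_trancl[OF this, of V E]
  obtain vs ss where c: "is_cycle E vs ss" and cV: "set vs \<subseteq> V" using arcV by blast
  have ne: "vs \<noteq> []" using c unfolding is_cycle_def by blast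
  have Vsub: "u \<in> set vs" if u: "u \<in> V" for u
  proof -
    have "vs!0 \<in> set vs" using ne by simp
    then have "(u, vs!0) \<in> ?R\<^sup>*" using scR u cV by blast
    then show ?thesis
    proof (induction rule: converse_rtrancl_induct)
      case base
      then show ?case using ne by simp
    next
      case (step y z)
      then obtain s where ys: "(y,z,s) \<in> E" by blast
      obtain t where t: "t < length vs" "(vs!t, z, ss!t) \<in> E" using pred_in_cycle[OF c step.IH] by blast
      have "z \<in> V" using arcV[OF ys] by blast
      then have "vs!t = y" using H[OF _ allF t(2) ys] by blast
      then show ?case using t(1) by (metis nth_mem)
    qed
  qed
  have "graph_is_cycle V E"
    unfolding graph_is_cycle_def
  proof (intro exI conjI)
    show "is_cycle E vs ss" by (rule c)
    show "set vs = V" using cV Vsub by blast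
    show "E = {(vs ! t, vs ! ((t + 1) mod length vs), ss ! t) |t. t < length vs}"
    proof
      show "{(vs ! t, vs ! ((t + 1) mod length vs), ss ! t) |t. t < length vs} \<subseteq> E"
        using c unfolding is_cycle_def by blast
      show "E \<subseteq> {(vs ! t, vs ! ((t + 1) mod length vs), ss ! t) |t. t < length vs}"
      proof
        fix e assume e: "e \<in> E"
        obtain a b s where abs: "e = (a,b,s)" by (cases e) auto
        have ab: "(a,b,s) \<in> E" using e abs by simp
        have bV: "b \<in> V" using arcV[OF ab] by blast
        obtain t where t: "t < length vs" "(vs!t, b, ss!t) \<in> E" "vs!((t+1) mod length vs) = b"
          using pred_in_cycle[OF c Vsub[OF bV]] by blast
        have "a = vs!t" using H[OF bV allF[OF bV] ab t(2)] .
        moreover have "s = ss!t" using nd ab t(2) calculation by blast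
        ultimately show "e \<in> {(vs ! t, vs ! ((t + 1) mod length vs), ss ! t) |t. t < length vs}"
          using abs t by blast
      qed
    qed
  qed
  then show False using ncyc by blast
qed



lemma sync_append:
  assumes "\<forall>x. x \<subseteq> V \<longrightarrow> upd_word f w0 x = c"
  shows "synchronizes V f (w0 @ p)"
  unfolding synchronizes_def using assms by (auto simp: upd_word_append)

theorem proposition5:
  fixes n :: nat and E :: sdigraph
  assumes "signed_digraph {1..n} E"
    and "strongly_connected {1..n} E"
    and "no_positive_cycle E"
    and "\<not> graph_is_cycle {1..n} E"
    and "tau {1..n} E \<le> 1"
  shows "\<exists>w. length w = 3 * n - 1 \<and> set w \<subseteq> {1..n} \<and>
           (\<forall>f. and_or_net {1..n} E f \<longrightarrow> synchronizes {1..n} f w)"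
proof -
  note sd = assms(1) and sc = assms(2) and npc = assms(3) and ncyc = assms(4)
  define V where "V = {1..n}"
  have arcV: "\<And>a b s. (a,b,s) \<in> E \<Longrightarrow> a \<in> V \<and> b \<in> V \<and> (s = 1 \<or> s = -1)"
    using sd unfolding signed_digraph_def V_def by auto
  consider "n = 0" | "n = 1" | "n \<ge> 2" by linarith
  then show ?thesis
  proof cases
    case 1
    show ?thesis
    proof (intro exI[of _ "[]"] conjI allI impI)
      fix f
      show "synchronizes {1..n} f []" unfolding synchronizes_def using 1 by (auto simp: upd_word_Nil)
    qed (use 1 in auto)
  next
    case 2
    have V1: "V = {1}" unfolding V_def using 2 by auto
    have n1: "(1,1,1) \<notin> E"
    proof
      assume "(1,1,1) \<in> E"
      then have "is_cycle E [1] [1]" unfolding is_cycle_def by simp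
      then show False using npc unfolding no_positive_cycle_def cycle_sign_def by fastforce
    qed
    have n2: "(1,1,-1) \<notin> E"
    proof
      assume h: "(1,1,-1) \<in> E"
      have EE: "E = {(1,1,-1)}"
      proof
        show "E \<subseteq> {(1,1,-1)}"
        proof
          fix e assume "e \<in> E"
          moreover obtain a b s where "e = (a,b,s)" by (cases e) auto
          ultimately show "e \<in> {(1,1,-1)}" using arcV[of a b s] V1 n1 by auto
        qed
      qed (use h in simp)
      have "graph_is_cycle {1..n} E"
        unfolding graph_is_cycle_def
      proof (intro exI conjI)
        show "is_cycle E [1] [-1]" unfolding is_cycle_def using h by simp
        show "set [1] = {1..n}" using 2 by simp
        show "E = {([1] ! t, [1] ! ((t + 1) mod length [1]), [- 1] ! t) |t. t < length [1]}"
          using EE by simp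
      qed
      then show False using ncyc by blast
    qed
    have E0: "E = {}"
    proof -
      have "e \<notin> E" for e
      proof
        assume "e \<in> E"
        moreover obtain a b s where "e = (a,b,s)" by (cases e) auto
        ultimately show False using arcV[of a b s] V1 n1 n2 by auto
      qed
      then show ?thesis by blast
    qed
    show ?thesis
    proof (intro exI[of _ "[1,1]"] conjI allI impI)
      show "length [1::nat, 1] = 3 * n - 1" using 2 by simp
      show "set [1::nat, 1] \<subseteq> {1..n}" using 2 by simp
      fix f assume ao: "and_or_net {1..n} E f"
      have "1 \<in> V" using V1 by simp
      from ao_cases[OF sd ao, of 1] this
      have "\<exists>b. \<forall>x. x \<subseteq> V \<longrightarrow> (1 \<in> f x \<longleftrightarrow> b)"
        unfolding conjtype_def E0 V_def by auto
      then obtain b where b: "\<And>x. x \<subseteq> V \<Longrightarrow> (1 \<in> f x \<longleftrightarrow> b)" by blast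
      have u1: "upd f 1 x = (if b then {1} else {})" if "x \<subseteq> V" for x
        using b[OF that] that V1 unfolding upd_def by auto
      show "synchronizes {1..n} f [1, 1]"
        unfolding synchronizes_def
      proof (intro exI allI impI)
        fix x assume x: "x \<subseteq> {1..n}"
        have xV: "x \<subseteq> V" using x unfolding V_def by simp
        have e1: "upd f 1 x = (if b then {1} else {})" using u1[OF xV] .
        have "(if b then {1} else {}) \<subseteq> V" using V1 by auto
        then have e2: "upd f 1 (upd f 1 x) = (if b then {1} else {})" unfolding e1 by (rule u1)
        show "upd_word f [1,1] x = (if b then {1} else {})"
          using e2 unfolding upd_word_def by simp
      qed
    qed
  next
    case 3
    have finV: "finite V" unfolding V_def by simp
    have cardV: "card V = n" unfolding V_def by simp
    have two: "\<exists>w\<in>V. w \<noteq> u" if "u \<in> V" for u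
    proof (cases "u = 1")
      case True then show ?thesis using 3 by (intro bexI[of _ 2]) (auto simp: V_def)
    next
      case False then show ?thesis using 3 by (intro bexI[of _ 1]) (auto simp: V_def)
    qed
    have innb: "\<And>u. u \<in> V \<Longrightarrow> \<exists>a s. (a,u,s) \<in> E"
      using two innb_exists[OF sc[folded V_def]] by blast
    obtain v0 where v0: "v0 \<in> V" "feedback_vertex_set V E {v0}"
      using fvs_of_tau[OF sd assms(5)] 3 unfolding V_def by auto
    obtain v a1 a2 s1 s2 where vV: "v \<in> V" and fvs: "feedback_vertex_set V E {v}"
      and a: "a1 \<noteq> a2" "(a1,v,s1) \<in> E" "(a2,v,s2) \<in> E"
      using exists_good_v[OF sd[folded V_def] sc[folded V_def] npc ncyc[folded V_def] finV two v0] by blast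
    note ctx = sd[folded V_def] sc[folded V_def] npc fvs vV finV
    obtain \<sigma> where \<sigma>1: "\<And>a b s. (a,b,s) \<in> E \<Longrightarrow> b \<noteq> v \<Longrightarrow> \<sigma> b = \<sigma> a * s"
      and \<sigma>2: "\<And>a s. (a,v,s) \<in> E \<Longrightarrow> \<sigma> a * s = -1" and \<sigma>3: "\<sigma> v = 1"
      and \<sigma>4: "\<And>u. u \<in> V \<Longrightarrow> \<sigma> u = 1 \<or> \<sigma> u = -1"
      using sigma_exists[OF ctx] by blast
    obtain W b1 t1 b2 t2 where W: "W \<subseteq> V - {v}" "\<forall>w\<in>W. \<forall>a s. (a,w,s) \<in> E \<longrightarrow> a \<noteq> v \<longrightarrow> a \<in> W"
      and b1: "(b1,v,t1) \<in> E" "b1 \<in> W \<union> {v}" and b2: "(b2,v,t2) \<in> E" "b2 \<in> V - {v} - W"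
      using choose_W[OF ctx a] by blast
    have clD: "\<forall>w\<in>V - {v}. \<forall>a s. (a,w,s) \<in> E \<longrightarrow> a \<noteq> v \<longrightarrow> a \<in> V - {v}"
      using arcV by blast
    obtain S where S: "topo V E v {v} S" "set S = V - {v}" "distinct S"
      using topo_exists[OF ctx _ clD] by blast
    obtain T where T: "topo V E v {v} T" "set T = W" "distinct T"
      using topo_exists[OF ctx W] by blast
    have lS: "length S = n - 1" using distinct_card[OF S(3)] S(2) cardV vV finV by (simp add: card_Diff_singleton)
    have "W \<subseteq> (V - {v}) - {b2}" using W(1) b2(2) by blast
    moreover have "card ((V - {v}) - {b2}) = n - 2" using cardV vV b2(2) finV by (simp add: card_Diff_singleton)
    ultimately have "card W \<le> n - 2" using finV by (metis card_mono finite_Diff)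
    then have lT: "length T \<le> n - 2" using distinct_card[OF T(3)] T(2) by simp
    define w0 where "w0 = S @ [v] @ T @ [v] @ S"
    have lw0: "length w0 \<le> 3 * n - 1" unfolding w0_def using lS lT 3 by simp
    define w where "w = w0 @ replicate (3 * n - 1 - length w0) v"
    show ?thesis
    proof (intro exI[of _ w] conjI allI impI)
      show "length w = 3 * n - 1" unfolding w_def using lw0 by simp
      show "set w \<subseteq> {1..n}" unfolding w_def w0_def using S(2) T(2) W(1) vV unfolding V_def by auto
      fix f assume ao: "and_or_net {1..n} E f"
      have "\<forall>x. x \<subseteq> V \<longrightarrow> upd_word f w0 x = {u \<in> V. (\<not> conjtype V E f v) \<longleftrightarrow> \<sigma> u = 1}"
        unfolding w0_def
        using phase[where \<sigma>=\<sigma> and V=V and E=E and f=f and v=v, OF sd[folded V_def] ao[folded V_def] vV \<sigma>1 \<sigma>2 \<sigma>3 \<sigma>4 innb S(1) S(2) T(1) T(2) W(1) b1 b2] by blast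
      then show "synchronizes {1..n} f w" unfolding w_def V_def by (rule sync_append)
    qed
  qed
qed


end
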